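(* Fix $\alpha\in(0,1/2)$ and treatment qualities $q_1,q_3\in(0,1)$. Let $M(q_1,q_3)=\frac{2(4\alpha+1)}{3(1-q_3)}+\frac{2(3-4\alpha)}{3(1-q_1)}$ be the treatment's steady-state total user population and $Q(q_1,q_3)=\dfrac{q_3\frac{2(4\alpha+1)}{3(1-q_3)}+q_1\frac{2(3-4\alpha)}{3(1-q_1)}}{M(q_1,q_3)}$ its steady-state average recommendation quality (ARQ). Let $m^*=\frac{16(4\alpha+3)}{9}$ and $\overline{q}^*=\frac{8\alpha+3}{8\alpha+6}$ be the status quo's steady-state total population and ARQ. Then $M(q_1,q_3)>m^*$ if and only if $Q(q_1,q_3)>\overline{q}^*$, and $M(q_1,q_3)<m^*$ if and only if $Q(q_1,q_3)<\overline{q}^*$.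
   Context: Model: users have types $(x,e)\in\{1/4,3/4\}^2$; each period a unit mass of new users arrives with type distribution $F(3/4,3/4)=F(1/4,1/4)=\alpha$, $F(3/4,1/4)=F(1/4,3/4)=1/2-\alpha$. An algorithm assigns recommendation quality $q(x)\in(0,1)$ to segment $x$; a user of type $(x,e)$ churns each period with probability $(1-q(x))(1-e)$. The steady-state mass of type $(x,e)$ is $m(x,e)=F(x,e)/((1-q(x))(1-e))$; total population is $\sum_{x,e}m(x,e)$ and steady-state ARQ is $\sum_x q(x)\sum_e m(x,e)/\sum_{x,e}m(x,e)$. The status quo is $q^*(x)=x$; the treatment has $q(1/4)=q_1$, $q(3/4)=q_3$. The formulas for $M,Q,m^*,\overline{q}^*$ in the claim are these quantities written out. *)

theory Defs
  imports Complex_Main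
begin

definition popM :: "real \<Rightarrow> real \<Rightarrow> real \<Rightarrow> real" where
  "popM \<alpha> q1 q3 = 2 * (4 * \<alpha> + 1) / (3 * (1 - q3)) + 2 * (3 - 4 * \<alpha>) / (3 * (1 - q1))"

definition arqQ :: "real \<Rightarrow> real \<Rightarrow> real \<Rightarrow> real" where
  "arqQ \<alpha> q1 q3 =
     (q3 * (2 * (4 * \<alpha> + 1) / (3 * (1 - q3))) + q1 * (2 * (3 - 4 * \<alpha>) / (3 * (1 - q1))))
     / popM \<alpha> q1 q3"

definition mstar :: "real \<Rightarrow> real" where
  "mstar \<alpha> = 16 * (4 * \<alpha> + 3) / 9"

definition qbarstar :: "real \<Rightarrow> real" where
  "qbarstar \<alpha> = (8 * \<alpha> + 3) / (8 * \<alpha> + 6)"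

end

theory Submission
  imports Defs
begin

theorem proposition1:
  fixes \<alpha> q1 q3 :: real
  assumes "0 < \<alpha>" "\<alpha> < 1/2"
    and "0 < q1" "q1 < 1" "0 < q3" "q3 < 1"
  shows "(popM \<alpha> q1 q3 > mstar \<alpha> \<longleftrightarrow> arqQ \<alpha> q1 q3 > qbarstar \<alpha>) \<and>
         (popM \<alpha> q1 q3 < mstar \<alpha> \<longleftrightarrow> arqQ \<alpha> q1 q3 < qbarstar \<alpha>)"
proof -
  define M where "M = popM \<alpha> q1 q3"
  have a: "2 * (4 * \<alpha> + 1) / (3 * (1 - q3)) > 0" using assms by simp
  have b: "2 * (3 - 4 * \<alpha>) / (3 * (1 - q1)) > 0" using assms by simp
  have Mpos: "M > 0" using a b unfolding M_def popM_def by linarith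
  have num: "q3 * (2 * (4 * \<alpha> + 1) / (3 * (1 - q3))) + q1 * (2 * (3 - 4 * \<alpha>) / (3 * (1 - q1)))
      = M - 8/3"
  proof -
    define u v where "u = 1 - q1" and "v = 1 - q3"
    have u: "q1 = 1 - u" "u > 0" and v: "q3 = 1 - v" "v > 0" using assms u_def v_def by auto
    show ?thesis using u(2) v(2) unfolding M_def popM_def u(1) v(1) by (simp add: field_simps)
  qed
  have Q: "arqQ \<alpha> q1 q3 = 1 - (8/3) / M"
    using Mpos unfolding arqQ_def num by (simp add: M_def field_simps)
  have qb: "qbarstar \<alpha> = 1 - 3 / (8*\<alpha>+6)" using assms unfolding qbarstar_def by (simp add: field_simps)
  have d: "8*\<alpha>+6 > 0" using assms by simp
  have e1: "(1 - (8/3)/M > 1 - 3/(8*\<alpha>+6)) \<longleftrightarrow> M > 16 * (4 * \<alpha> + 3) / 9"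
    using Mpos d by (simp add: field_simps)
  have e2: "(1 - (8/3)/M < 1 - 3/(8*\<alpha>+6)) \<longleftrightarrow> M < 16 * (4 * \<alpha> + 3) / 9"
    using Mpos d by (simp add: field_simps)
  show ?thesis using e1 e2 unfolding Q qb mstar_def M_def by simp
qed

end
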